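(* Let $X$ be a $3$-dimensional Minkowski space whose closed unit ball has a $2$-dimensional face which is an $n$-gon. Then $m(X)\geq n+1$.
   Context: A Minkowski space is a finite-dimensional real normed space $(X,\|\cdot\|)$. For a set $S\subseteq X$, its midpoint set is $M(S)=\{\tfrac12(x+y): x,y\in S,\ x\neq y\}$. A set $S\subseteq X$ is an M-set if every vector in $M(S)$ has norm exactly $1$ and every vector in $S$ has norm strictly greater than $1$. $m(X)$ denotes the largest cardinality of an M-set in $X$ if such a largest finite cardinality exists, and $m(X)=\infty$ otherwise. *)

theory Defs
  imports "HOL-Analysis.Analysis" "HOL-Library.Extended_Nat"
begin

text \<open>A 3-dimensional Minkowski space is modelled (up to linear isometry) as the
  real vector space real^3 equipped with an arbitrary norm N.\<close>

definition is_norm :: "('a::real_vector \<Rightarrow> real) \<Rightarrow> bool" where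
  "is_norm N \<longleftrightarrow>
     (\<forall>x. N x = 0 \<longleftrightarrow> x = 0) \<and>
     (\<forall>c x. N (c *\<^sub>R x) = \<bar>c\<bar> * N x) \<and>
     (\<forall>x y. N (x + y) \<le> N x + N y)"

definition unit_ball_N :: "('a::real_vector \<Rightarrow> real) \<Rightarrow> 'a set" where
  "unit_ball_N N = {x. N x \<le> 1}"

definition midpoint_set :: "'a::real_vector set \<Rightarrow> 'a set" where
  "midpoint_set S = {(1/2) *\<^sub>R (x + y) | x y. x \<in> S \<and> y \<in> S \<and> x \<noteq> y}"

definition M_set :: "('a::real_vector \<Rightarrow> real) \<Rightarrow> 'a set \<Rightarrow> bool" where
  "M_set N S \<longleftrightarrow> (\<forall>z \<in> midpoint_set S. N z = 1) \<and> (\<forall>x \<in> S. N x > 1)"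

text \<open>m(X): the largest cardinality of an M-set, or \<infinity> if there is none
  (the supremum over finite M-sets; an infinite M-set has arbitrarily large finite
  M-subsets, so this agrees with the paper's definition).\<close>

definition m_num :: "('a::real_vector \<Rightarrow> real) \<Rightarrow> enat" where
  "m_num N = (SUP S \<in> {S. M_set N S \<and> finite S}. enat (card S))"

definition is_ngon :: "'a::euclidean_space set \<Rightarrow> nat \<Rightarrow> bool" where
  "is_ngon F n \<longleftrightarrow> polytope F \<and> aff_dim F = 2 \<and> card {v. v extreme_point_of F} = n"

end

theory Submission
  imports Defs
begin

lemma norm_props:
  fixes N :: "'a::euclidean_space \<Rightarrow> real"
  assumes "is_norm N"
  shows "N 0 = 0" "\<And>x. N (- x) = N x" "\<And>c x. N (c *\<^sub>R x) = \<bar>c\<bar> * N x"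
    "\<And>x y. N (x + y) \<le> N x + N y" "\<And>x. N x \<ge> 0"
proof -
  show h: "\<And>c x. N (c *\<^sub>R x) = \<bar>c\<bar> * N x" using assms by (simp add: is_norm_def)
  show t: "\<And>x y. N (x + y) \<le> N x + N y" using assms by (simp add: is_norm_def)
  show "N 0 = 0" using assms by (simp add: is_norm_def)
  show "\<And>x. N (- x) = N x" using h[of "-1"] by simp
  show "\<And>x. N x \<ge> 0"
  proof -
    fix x
    have "N (x + - x) \<le> N x + N (- x)" by (rule t)
    moreover have "N (- x) = N x" using h[of "-1" x] by simp
    moreover have "N 0 = 0" using assms by (simp add: is_norm_def)
    ultimately show "N x \<ge> 0" by simp
  qed
qed

lemma norm_sum_le:
  fixes N :: "'a::euclidean_space \<Rightarrow> real"
  assumes "is_norm N" "finite I"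
  shows "N (\<Sum>i\<in>I. f i) \<le> (\<Sum>i\<in>I. N (f i))"
  using assms(2)
proof (induction I rule: finite_induct)
  case empty then show ?case using norm_props[OF assms(1)] by simp
next
  case (insert i I)
  then show ?case using norm_props(4)[OF assms(1), of "f i" "sum f I"] by simp
qed

lemma norm_bound:
  fixes N :: "'a::euclidean_space \<Rightarrow> real"
  assumes "is_norm N"
  shows "N x \<le> (\<Sum>b\<in>Basis. N b) * norm x"
proof -
  have "N x = N (\<Sum>b\<in>Basis. (x \<bullet> b) *\<^sub>R b)" by (simp add: euclidean_representation)
  also have "\<dots> \<le> (\<Sum>b\<in>Basis. N ((x \<bullet> b) *\<^sub>R b))" by (rule norm_sum_le[OF assms]) simp
  also have "\<dots> = (\<Sum>b\<in>Basis. \<bar>x \<bullet> b\<bar> * N b)" using norm_props(3)[OF assms] by simp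
  also have "\<dots> \<le> (\<Sum>b\<in>Basis. norm x * N b)"
    by (intro sum_mono mult_right_mono Basis_le_norm norm_props(5)[OF assms])
  finally show ?thesis by (simp add: sum_distrib_left mult.commute)
qed

lemma convex_ball_N:
  fixes N :: "'a::euclidean_space \<Rightarrow> real"
  assumes "is_norm N"
  shows "convex (unit_ball_N N)"
  unfolding convex_def unit_ball_N_def
proof (intro allI impI ballI, clarsimp)
  fix x y :: 'a and u v :: real
  assume "N x \<le> 1" "N y \<le> 1" "0 \<le> u" "0 \<le> v" "u + v = 1"
  have "N (u *\<^sub>R x + v *\<^sub>R y) \<le> N (u *\<^sub>R x) + N (v *\<^sub>R y)" using norm_props(4)[OF assms] .
  also have "\<dots> = u * N x + v * N y" using norm_props(3)[OF assms] \<open>0 \<le> u\<close> \<open>0 \<le> v\<close> by simp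
  also have "\<dots> \<le> u * 1 + v * 1"
    using \<open>N x \<le> 1\<close> \<open>N y \<le> 1\<close> \<open>0 \<le> u\<close> \<open>0 \<le> v\<close> by (intro add_mono mult_left_mono) auto
  finally show "N (u *\<^sub>R x + v *\<^sub>R y) \<le> 1" using \<open>u + v = 1\<close> by simp
qed

lemma interior_ball_N:
  fixes N :: "'a::euclidean_space \<Rightarrow> real"
  assumes "is_norm N" "N x < 1"
  shows "x \<in> interior (unit_ball_N N)"
proof -
  define K where "K = (\<Sum>b\<in>Basis. N b)"
  have K0: "K \<ge> 0" unfolding K_def using norm_props(5)[OF assms(1)] by (simp add: sum_nonneg)
  define r where "r = (1 - N x) / (K + 1)"
  have r0: "r > 0" unfolding r_def using assms K0 by simp
  have "ball x r \<subseteq> unit_ball_N N"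
  proof
    fix y assume "y \<in> ball x r"
    then have d: "norm (y - x) < r" by (simp add: dist_norm norm_minus_commute)
    have "N y = N (x + (y - x))" by simp
    also have "\<dots> \<le> N x + N (y - x)" by (rule norm_props(4)[OF assms(1)])
    also have "N (y - x) \<le> K * norm (y - x)" unfolding K_def by (rule norm_bound[OF assms(1)])
    also have "K * norm (y - x) \<le> K * r" using d K0 by (intro mult_left_mono) auto
    also have "K * r \<le> 1 - N x"
    proof -
      have "K * r = (1 - N x) * (K / (K + 1))" unfolding r_def by (simp add: field_simps)
      also have "\<dots> \<le> (1 - N x) * 1" using assms K0 by (intro mult_left_mono) auto
      finally show ?thesis by simp
    qed
    finally show "y \<in> unit_ball_N N" by (simp add: unit_ball_N_def)
  qed
  then show ?thesis using r0 by (meson centre_in_ball interior_maximal open_ball subsetD)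
qed



lemma helly2:
  fixes U :: "'i \<Rightarrow> 'a::euclidean_space set"
  assumes "finite I" "card I \<ge> 3" "\<And>i. i \<in> I \<Longrightarrow> convex (U i)" "\<And>i. i \<in> I \<Longrightarrow> U i \<subseteq> A"
    "aff_dim A \<le> 2"
    "\<And>i j k. i\<in>I \<Longrightarrow> j\<in>I \<Longrightarrow> k\<in>I \<Longrightarrow> i\<noteq>j \<Longrightarrow> j\<noteq>k \<Longrightarrow> i\<noteq>k \<Longrightarrow> U i \<inter> U j \<inter> U k \<noteq> {}"
  shows "(\<Inter>i\<in>I. U i) \<noteq> {}"
  using assms
proof (induction "card I" arbitrary: I rule: less_induct)
  case less
  show ?case
  proof (cases "card I = 3")
    case True
    then obtain i j k where "I = {i,j,k}" "i\<noteq>j" "j\<noteq>k" "i\<noteq>k" by (auto simp: card_3_iff)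
    then show ?thesis using less.prems(6)[of i j k] by auto
  next
    case False
    then have c4: "card I \<ge> 4" using less.prems(2) by auto
    have "(\<Inter>j\<in>I - {i}. U j) \<noteq> {}" if "i \<in> I" for i
    proof (rule less.hyps)
      show "card (I - {i}) < card I" using that less.prems(1) c4 by (simp add: card_Diff1_less)
      show "3 \<le> card (I - {i})" using that less.prems(1) c4 by simp
    qed (use less.prems in auto)
    then have "\<forall>i\<in>I. \<exists>x. x \<in> (\<Inter>j\<in>I - {i}. U j)" by blast
    then obtain X where X: "\<And>i. i \<in> I \<Longrightarrow> X i \<in> (\<Inter>j\<in>I - {i}. U j)"
      by metis
    show ?thesis
    proof (cases "inj_on X I")
      case False
      then obtain i j where ij: "i \<in> I" "j \<in> I" "i \<noteq> j" "X i = X j" by (auto simp: inj_on_def)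
      have "X i \<in> (\<Inter>l\<in>I. U l)"
      proof
        fix l assume "l \<in> I"
        show "X i \<in> U l"
        proof (cases "l = i")
          case True then show ?thesis using X[OF ij(2)] ij by auto
        next
          case False then show ?thesis using X[OF ij(1)] \<open>l \<in> I\<close> by auto
        qed
      qed
      then show ?thesis by auto
    next
      case True
      define Y where "Y = X ` I"
      have fY: "finite Y" using less.prems(1) by (simp add: Y_def)
      have cY: "card Y = card I" using True by (simp add: Y_def card_image)
      have YA: "Y \<subseteq> A"
      proof
        fix y assume "y \<in> Y"
        then obtain i where i: "i \<in> I" "y = X i" by (auto simp: Y_def)
        have "card (I - {i}) \<ge> 3" using i(1) less.prems(1) c4 by simp
        then have "I - {i} \<noteq> {}" by (metis card.empty not_numeral_le_zero)
        then obtain j where "j \<in> I" "j \<noteq> i" by auto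
        then show "y \<in> A" using X[OF i(1)] i less.prems(4)[of j] by auto
      qed
      have "affine_dependent Y"
      proof (rule ccontr)
        assume "\<not> affine_dependent Y"
        then have "aff_dim Y = int (card Y) - 1" by (simp add: affine_independent_iff_card)
        moreover have "aff_dim Y \<le> aff_dim A" using YA by (rule aff_dim_subset)
        ultimately show False using cY c4 less.prems(5) by linarith
      qed
      then obtain M P where MP: "M \<inter> P = {}" "M \<union> P = Y" "convex hull M \<inter> convex hull P \<noteq> {}"
        using Radon_partition[OF fY] by blast
      then obtain y where y: "y \<in> convex hull M" "y \<in> convex hull P" by auto
      have "y \<in> U j" if j: "j \<in> I" for j
      proof (cases "X j \<in> M")
        case True
        then have "X j \<notin> P" using MP by auto
        have "P \<subseteq> U j"
        proof
          fix x assume "x \<in> P"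
          then obtain i where i: "i \<in> I" "x = X i" using MP by (auto simp: Y_def)
          then have "i \<noteq> j" using \<open>X j \<notin> P\<close> \<open>x \<in> P\<close> by auto
          then show "x \<in> U j" using X[OF i(1)] i j by auto
        qed
        then have "convex hull P \<subseteq> U j" using less.prems(3)[OF j] by (simp add: hull_minimal)
        then show ?thesis using y by auto
      next
        case False
        have "M \<subseteq> U j"
        proof
          fix x assume "x \<in> M"
          then obtain i where i: "i \<in> I" "x = X i" using MP by (auto simp: Y_def)
          then have "i \<noteq> j" using False \<open>x \<in> M\<close> by auto
          then show "x \<in> U j" using X[OF i(1)] i j by auto
        qed
        then have "convex hull M \<subseteq> U j" using less.prems(3)[OF j] by (simp add: hull_minimal)
        then show ?thesis using y by auto
      qed
      then show ?thesis by auto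
    qed
  qed
qed


lemma half_half: "(u/2) *\<^sub>R x + (u/2) *\<^sub>R x = u *\<^sub>R (x::'a::real_vector)"
  by (simp add: scaleR_add_left[symmetric])

lemma half_half1: "(1/2) *\<^sub>R x + (1/2) *\<^sub>R x = (x::'a::real_vector)"
  by (simp add: scaleR_add_left[symmetric])

lemma ev_vec:
  fixes a u w :: "'a::real_inner"
  assumes "a \<bullet> u < K"
  shows "eventually (\<lambda>t. a \<bullet> (u + t *\<^sub>R w) < K) (at_right (0::real))"
proof -
  have "((\<lambda>t. a \<bullet> u + t * (a \<bullet> w)) \<longlongrightarrow> a \<bullet> u + 0 * (a \<bullet> w)) (at_right (0::real))"
    by (intro tendsto_intros)
  then have "eventually (\<lambda>t. a \<bullet> u + t * (a \<bullet> w) < K) (at_right (0::real))"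
    using assms by (intro order_tendstoD(2)) auto
  then show ?thesis by (simp add: inner_add_right)
qed

locale polyrep =
  fixes F :: "'a::euclidean_space set" and H :: "'a set set" and a :: "'a set \<Rightarrow> 'a" and b :: "'a set \<Rightarrow> real"
  assumes finH: "finite H"
    and seq: "F = affine hull F \<inter> \<Inter>H"
    and ab: "\<And>h. h \<in> H \<Longrightarrow> a h \<noteq> 0 \<and> h = {x. a h \<bullet> x \<le> b h}"
    and minH: "\<And>F'. F' \<subset> H \<Longrightarrow> F \<subset> affine hull F \<inter> \<Inter>F'"
begin

lemma memF: "x \<in> F \<longleftrightarrow> x \<in> affine hull F \<and> (\<forall>h\<in>H. a h \<bullet> x \<le> b h)"
proof -
  have "x \<in> F \<longleftrightarrow> x \<in> affine hull F \<inter> \<Inter>H" using seq by blast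
  also have "\<dots> \<longleftrightarrow> x \<in> affine hull F \<and> (\<forall>h\<in>H. a h \<bullet> x \<le> b h)"
    using ab by auto
  finally show ?thesis .
qed

lemma inF: "x \<in> F \<Longrightarrow> h \<in> H \<Longrightarrow> a h \<bullet> x \<le> b h"
  using memF by auto

lemma facet_iff: "C facet_of F \<longleftrightarrow> (\<exists>h. h \<in> H \<and> C = F \<inter> {x. a h \<bullet> x = b h})"
  by (rule facet_of_polyhedron_explicit[OF finH seq ab minH])

lemma tight:
  assumes C: "C facet_of F" and p: "p \<in> rel_interior C" and h: "h \<in> H" and e: "a h \<bullet> p = b h"
  shows "C = F \<inter> {x. a h \<bullet> x = b h}"
proof -
  define C' where "C' = F \<inter> {x. a h \<bullet> x = b h}"
  have C'f: "C' facet_of F" using facet_iff h C'_def by auto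
  have pC: "p \<in> C" using p rel_interior_subset by auto
  have CF: "C \<subseteq> F" using C facet_of_imp_subset by auto
  have pC': "p \<in> C'" using pC CF e C'_def by auto
  have "C \<subseteq> C'"
    by (rule subset_of_face_of[OF facet_of_imp_face_of[OF C'f] CF]) (use pC' p in auto)
  have fc: "C face_of C'"
    using face_of_subset[OF facet_of_imp_face_of[OF C] \<open>C \<subseteq> C'\<close> facet_of_imp_subset[OF C'f]] .
  show ?thesis
  proof (rule ccontr)
    assume "C \<noteq> F \<inter> {x. a h \<bullet> x = b h}"
    then have "C \<noteq> C'" by (simp add: C'_def)
    then have "aff_dim C < aff_dim C'"
      using face_of_aff_dim_lt[OF face_of_imp_convex[OF facet_of_imp_face_of[OF C'f]] fc] by simp
    moreover have "aff_dim C = aff_dim C'" using C C'f by (simp add: facet_of_def)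
    ultimately show False by simp
  qed
qed

lemma strict_mid:
  assumes C: "C facet_of F" and D: "D facet_of F" and CD: "C \<noteq> D"
    and p: "p \<in> rel_interior C" and q: "q \<in> rel_interior D" and h: "h \<in> H"
  shows "a h \<bullet> ((1/2) *\<^sub>R (p + q)) < b h"
proof -
  have pF: "p \<in> F" using p rel_interior_subset facet_of_imp_subset[OF C] by auto
  have qF: "q \<in> F" using q rel_interior_subset facet_of_imp_subset[OF D] by auto
  have 1: "a h \<bullet> p \<le> b h" "a h \<bullet> q \<le> b h" using inF pF qF h by auto
  have "\<not> (a h \<bullet> p = b h \<and> a h \<bullet> q = b h)"
    using tight[OF C p h] tight[OF D q h] CD by auto
  then have "a h \<bullet> p + a h \<bullet> q < 2 * b h" using 1 by auto
  then show ?thesis by (simp add: inner_add_right)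
qed

lemma vertex_two:
  assumes A2: "aff_dim F = 2" and v: "v extreme_point_of F" and fin: "finite {C. C facet_of F}"
  shows "2 \<le> card {C. C facet_of F \<and> v \<in> C}"
proof (rule ccontr)
  define I where "I = {C. C facet_of F \<and> v \<in> C}"
  assume "\<not> 2 \<le> card {C. C facet_of F \<and> v \<in> C}"
  then have cI: "card I \<le> 1" by (simp add: I_def)
  have fI: "finite I" using fin by (rule rev_finite_subset) (auto simp: I_def)
  have I1: "\<And>C D. C \<in> I \<Longrightarrow> D \<in> I \<Longrightarrow> C = D"
    using cI fI by (metis One_nat_def card_le_Suc0_iff_eq)
  have vF: "v \<in> F" using v by (simp add: extreme_point_of_def)
  have tI: "F \<inter> {x. a h \<bullet> x = b h} \<in> I" if "h \<in> H" "a h \<bullet> v = b h" for h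
    using that facet_iff vF by (auto simp: I_def)
  obtain u where uF: "u \<in> F" and uv: "u \<noteq> v" and ut: "\<And>h. h \<in> H \<Longrightarrow> a h \<bullet> v = b h \<Longrightarrow> a h \<bullet> u = b h"
  proof (cases "I = {}")
    case True
    have "\<not> F \<subseteq> {v}"
    proof
      assume "F \<subseteq> {v}"
      then have "aff_dim F \<le> aff_dim {v}" by (rule aff_dim_subset)
      then show False using A2 by simp
    qed
    then obtain u where "u \<in> F" "u \<noteq> v" by auto
    then show ?thesis using that tI True by blast
  next
    case False
    then obtain C where C: "C \<in> I" by auto
    then have Cf: "C facet_of F" by (simp add: I_def)
    have "\<not> C \<subseteq> {v}"
    proof
      assume "C \<subseteq> {v}"
      then have "aff_dim C \<le> aff_dim {v}" by (rule aff_dim_subset)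
      then show False using A2 Cf by (simp add: facet_of_def)
    qed
    then obtain u where u: "u \<in> C" "u \<noteq> v" by auto
    have "a h \<bullet> u = b h" if "h \<in> H" "a h \<bullet> v = b h" for h
    proof -
      have "F \<inter> {x. a h \<bullet> x = b h} = C" using I1[OF tI[OF that] C] .
      then show ?thesis using u by auto
    qed
    moreover have "u \<in> F" using u Cf facet_of_imp_subset by auto
    ultimately show ?thesis using that u by blast
  qed
  define d where "d = u - v"
  have "eventually (\<lambda>t. \<forall>h\<in>H. a h \<bullet> v < b h \<longrightarrow> (a h \<bullet> (v + t *\<^sub>R d) < b h \<and> a h \<bullet> (v + t *\<^sub>R (-d)) < b h)) (at_right (0::real))"
  proof (rule eventually_ball_finite[OF finH], rule ballI)
    fix h assume "h \<in> H"
    show "eventually (\<lambda>t. a h \<bullet> v < b h \<longrightarrow> (a h \<bullet> (v + t *\<^sub>R d) < b h \<and> a h \<bullet> (v + t *\<^sub>R (-d)) < b h)) (at_right (0::real))"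
    proof (cases "a h \<bullet> v < b h")
      case True
      have "eventually (\<lambda>t. a h \<bullet> (v + t *\<^sub>R d) < b h \<and> a h \<bullet> (v + t *\<^sub>R (-d)) < b h) (at_right (0::real))"
        using eventually_conj[OF ev_vec[OF True, of d] ev_vec[OF True, of "-d"]] .
      then show ?thesis by (rule eventually_mono) auto
    next
      case False then show ?thesis by simp
    qed
  qed
  then obtain t where t0: "t > 0"
    and tH: "\<And>h. h \<in> H \<Longrightarrow> a h \<bullet> v < b h \<Longrightarrow> a h \<bullet> (v + t *\<^sub>R d) < b h \<and> a h \<bullet> (v + t *\<^sub>R (-d)) < b h"
    unfolding eventually_at_right_field by (metis field_lbound_gt_zero less_numeral_extra(1))
  define x1 where "x1 = v + t *\<^sub>R d"
  define x2 where "x2 = v + t *\<^sub>R (-d)"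
  have aff: "affine (affine hull F)" by simp
  have vA: "v \<in> affine hull F" "u \<in> affine hull F" using vF uF by (auto simp: hull_inc)
  have x1A: "x1 \<in> affine hull F"
  proof -
    have "(1 - t) *\<^sub>R v + t *\<^sub>R u \<in> affine hull F" by (rule mem_affine[OF aff vA]) simp
    moreover have "(1 - t) *\<^sub>R v + t *\<^sub>R u = x1" by (simp add: x1_def d_def algebra_simps)
    ultimately show ?thesis by simp
  qed
  have x2A: "x2 \<in> affine hull F"
  proof -
    have "(1 + t) *\<^sub>R v + (- t) *\<^sub>R u \<in> affine hull F" by (rule mem_affine[OF aff vA]) simp
    moreover have "(1 + t) *\<^sub>R v + (- t) *\<^sub>R u = x2" by (simp add: x2_def d_def algebra_simps)
    ultimately show ?thesis by simp
  qed
  have x12: "a h \<bullet> x1 \<le> b h \<and> a h \<bullet> x2 \<le> b h" if h: "h \<in> H" for h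
  proof (cases "a h \<bullet> v = b h")
    case True
    then have "a h \<bullet> u = b h" using ut h by auto
    then show ?thesis using True by (simp add: x1_def x2_def d_def inner_add_right inner_diff_right)
  next
    case False
    then have "a h \<bullet> v < b h" using inF[OF vF h] by auto
    then show ?thesis using tH[OF h] by (simp add: x1_def x2_def less_imp_le)
  qed
  have x1F: "x1 \<in> F" and x2F: "x2 \<in> F" using x1A x2A x12 memF by auto
  have "x1 \<noteq> x2"
  proof
    assume "x1 = x2"
    then have "t *\<^sub>R d + t *\<^sub>R d = 0" by (simp add: x1_def x2_def algebra_simps)
    then have "(2 * t) *\<^sub>R d = 0" by (simp add: scaleR_add_left[symmetric])
    then have "d = 0" using t0 by simp
    then show False using uv by (simp add: d_def)
  qed
  then have "midpoint x1 x2 \<in> open_segment x1 x2" by simp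
  moreover have "midpoint x1 x2 = v"
    by (simp add: midpoint_def x1_def x2_def algebra_simps half_half1)
  ultimately show False using v x1F x2F by (auto simp: extreme_point_of_def)
qed

lemma facet_le2:
  assumes C: "C facet_of F" and A2: "aff_dim F = 2"
  shows "card {v. v extreme_point_of F \<and> v \<in> C} \<le> 2"
proof (rule ccontr)
  define S where "S = {v. v extreme_point_of F \<and> v \<in> C}"
  assume "\<not> card {v. v extreme_point_of F \<and> v \<in> C} \<le> 2"
  then have "3 \<le> card S" by (simp add: S_def)
  then obtain T where T: "T \<subseteq> S" "card T = 3" by (metis obtain_subset_with_card_n)
  then obtain x y z where xyz: "T = {x,y,z}" "x \<noteq> y" "y \<noteq> z" "x \<noteq> z" by (auto simp: card_3_iff)
  have sub: "{x,y,z} \<subseteq> C" using T xyz by (auto simp: S_def)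
  have ext: "x extreme_point_of F" "y extreme_point_of F" "z extreme_point_of F"
    using T xyz by (auto simp: S_def)
  have CF: "C \<subseteq> F" using C facet_of_imp_subset by auto
  have "aff_dim {x,y,z} \<le> aff_dim C" using sub by (rule aff_dim_subset)
  also have "aff_dim C = 1" using C A2 by (simp add: facet_of_def)
  finally have "collinear {x,y,z}" by (simp add: collinear_aff_dim)
  then have "between (y,z) x \<or> between (z,x) y \<or> between (x,y) z" by (simp add: collinear_between_cases)
  then show False
  proof (elim disjE)
    assume "between (y,z) x"
    then have "x \<in> open_segment y z" using xyz by (simp add: between_mem_segment open_segment_def)
    then show False using ext(1) sub CF by (auto simp: extreme_point_of_def)
  next
    assume "between (z,x) y"
    then have "y \<in> open_segment z x" using xyz by (simp add: between_mem_segment open_segment_def)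
    then show False using ext(2) sub CF by (auto simp: extreme_point_of_def)
  next
    assume "between (x,y) z"
    then have "z \<in> open_segment x y" using xyz by (simp add: between_mem_segment open_segment_def)
    then show False using ext(3) sub CF by (auto simp: extreme_point_of_def)
  qed
qed

lemma count_facets:
  assumes A2: "aff_dim F = 2" and finV: "finite {v. v extreme_point_of F}"
    and finC: "finite {C. C facet_of F}"
  shows "card {v. v extreme_point_of F} \<le> card {C. C facet_of F}"
proof -
  define V where "V = {v. v extreme_point_of F}"
  define Fs where "Fs = {C. C facet_of F}"
  have "2 * card V = (\<Sum>v\<in>V. 2)" by simp
  also have "\<dots> \<le> (\<Sum>v\<in>V. card {C\<in>Fs. v \<in> C})"
    by (intro sum_mono) (use vertex_two[OF A2 _ finC] in \<open>auto simp: V_def Fs_def\<close>)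
  also have "\<dots> = (\<Sum>v\<in>V. \<Sum>C\<in>Fs. if v \<in> C then 1 else 0)"
    using finC by (simp add: Fs_def sum.If_cases Int_def)
  also have "\<dots> = (\<Sum>C\<in>Fs. \<Sum>v\<in>V. if v \<in> C then 1 else 0)" by (rule sum.swap)
  also have "\<dots> = (\<Sum>C\<in>Fs. card {v\<in>V. v \<in> C})"
    using finV by (simp add: V_def sum.If_cases Int_def)
  also have "\<dots> \<le> (\<Sum>C\<in>Fs. 2)"
    by (intro sum_mono) (use facet_le2[OF _ A2] in \<open>auto simp: V_def Fs_def\<close>)
  also have "\<dots> = 2 * card Fs" by simp
  finally show ?thesis by (simp add: V_def Fs_def)
qed

end

lemma ev_imp: "(P \<Longrightarrow> eventually Q F) \<Longrightarrow> eventually (\<lambda>x. P \<longrightarrow> Q x) F"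
  by (cases P) auto

lemma core:
  fixes F :: "'a::euclidean_space set"
  assumes poly: "polytope F" and A2: "aff_dim F = 2" and nV: "card {v. v extreme_point_of F} = n"
  obtains c Z where "c \<in> F" "finite Z" "card Z \<ge> n" "Z \<subseteq> affine hull F - F"
    "\<And>z. z \<in> Z \<Longrightarrow> (1/2) *\<^sub>R (3 *\<^sub>R c - z) \<in> F"
    "\<And>z z'. z \<in> Z \<Longrightarrow> z' \<in> Z \<Longrightarrow> z \<noteq> z' \<Longrightarrow> (1/2) *\<^sub>R (z + z') \<in> F"
proof -
  have ph: "polyhedron F" using poly by (rule polytope_imp_polyhedron)
  obtain H where "finite H" and seq: "F = affine hull F \<inter> \<Inter>H"
             and faces: "\<And>h. h \<in> H \<Longrightarrow> \<exists>a b. a \<noteq> 0 \<and> h = {x. a \<bullet> x \<le> b}"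
             and min: "\<And>F'. F' \<subset> H \<Longrightarrow> F \<subset> (affine hull F) \<inter> \<Inter>F'"
    using ph by (simp add: polyhedron_Int_affine_minimal) meson
  then obtain a b where ab: "\<And>h. h \<in> H \<Longrightarrow> a h \<noteq> 0 \<and> h = {x. a h \<bullet> x \<le> b h}"
    by metis
  interpret polyrep F H a b
    by unfold_locales (use \<open>finite H\<close> seq ab min in auto)
  define V where "V = {v. v extreme_point_of F}"
  define Fs where "Fs = {C. C facet_of F}"
  have finV: "finite V" unfolding V_def by (rule finite_polyhedron_extreme_points[OF ph])
  have finFs: "finite Fs" unfolding Fs_def by (rule finite_polytope_facets[OF poly])
  have cvx: "convex F" using poly by (rule polytope_imp_convex)
  have "F = convex hull V"
    unfolding V_def by (rule Krein_Milman_Minkowski[OF polytope_imp_compact[OF poly] cvx])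
  then have "aff_dim F = aff_dim V" by (simp add: aff_dim_convex_hull)
  also have "\<dots> \<le> int (card V) - 1" by (rule aff_dim_le_card[OF finV])
  finally have n3: "n \<ge> 3" using A2 nV by (simp add: V_def)
  have nFs: "n \<le> card Fs" using count_facets[OF A2] finV finFs nV by (simp add: V_def Fs_def)
  have "\<forall>C\<in>Fs. \<exists>x. x \<in> rel_interior C"
  proof
    fix C assume "C \<in> Fs"
    then have "convex C" "C \<noteq> {}" using face_of_imp_convex facet_of_imp_face_of
      by (auto simp: Fs_def facet_of_def)
    then show "\<exists>x. x \<in> rel_interior C" using rel_interior_eq_empty by blast
  qed
  then obtain p where p: "\<And>C. C \<in> Fs \<Longrightarrow> p C \<in> rel_interior C" by metis
  have "\<forall>C\<in>Fs. \<exists>h. h \<in> H \<and> C = F \<inter> {x. a h \<bullet> x = b h}" using facet_iff by (auto simp: Fs_def)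
  then obtain hC where hC: "\<And>C. C \<in> Fs \<Longrightarrow> hC C \<in> H" "\<And>C. C \<in> Fs \<Longrightarrow> C = F \<inter> {x. a (hC C) \<bullet> x = b (hC C)}"
    by metis
  have pF: "p C \<in> F" if "C \<in> Fs" for C
    using p[OF that] rel_interior_subset facet_of_imp_subset that by (fastforce simp: Fs_def)
  have pA: "p C \<in> affine hull F" if "C \<in> Fs" for C using pF[OF that] by (simp add: hull_inc)
  have ptight: "a (hC C) \<bullet> p C = b (hC C)" if "C \<in> Fs" for C
    using rel_interior_subset p[OF that] hC(2)[OF that] by blast
  have aff: "affine (affine hull F)" by simp
  define U where "U C = affine hull F \<inter> (\<Inter>h\<in>H. {c. ((3/2) *\<^sub>R a h) \<bullet> c < b h + (1/2) * (a h \<bullet> p C)})" for C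
  have Uiff: "c \<in> U C \<longleftrightarrow> c \<in> affine hull F \<and> (\<forall>h\<in>H. a h \<bullet> ((1/2) *\<^sub>R (3 *\<^sub>R c - p C)) < b h)" for c C
    by (auto simp: U_def inner_diff_right algebra_simps)
  have "(\<Inter>C\<in>Fs. U C) \<noteq> {}"
  proof (rule helly2[where A = "affine hull F"])
    show "finite Fs" by fact
    show "3 \<le> card Fs" using n3 nFs by simp
    show "convex (U C)" for C
      unfolding U_def by (intro convex_Int convex_INT convex_halfspace_lt) simp
    show "U C \<subseteq> affine hull F" for C by (simp add: U_def)
    show "aff_dim (affine hull F) \<le> 2" using A2 by simp
    fix C1 C2 C3 assume C: "C1 \<in> Fs" "C2 \<in> Fs" "C3 \<in> Fs" "C1 \<noteq> C2" "C2 \<noteq> C3" "C1 \<noteq> C3"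
    define c where "c = (1/3) *\<^sub>R p C1 + (1/3) *\<^sub>R p C2 + (1/3) *\<^sub>R p C3"
    have cA: "c \<in> affine hull F" unfolding c_def by (rule mem_affine_3[OF aff pA pA pA]) (use C in auto)
    have e1: "(1/2) *\<^sub>R (3 *\<^sub>R c - p C1) = (1/2) *\<^sub>R (p C2 + p C3)" by (simp add: c_def algebra_simps)
    have e2: "(1/2) *\<^sub>R (3 *\<^sub>R c - p C2) = (1/2) *\<^sub>R (p C1 + p C3)" by (simp add: c_def algebra_simps)
    have e3: "(1/2) *\<^sub>R (3 *\<^sub>R c - p C3) = (1/2) *\<^sub>R (p C1 + p C2)" by (simp add: c_def algebra_simps)
    have "c \<in> U C1" "c \<in> U C2" "c \<in> U C3" unfolding Uiff e1 e2 e3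
      using cA strict_mid p C by (auto simp: Fs_def)
    then show "U C1 \<inter> U C2 \<inter> U C3 \<noteq> {}" by auto
  qed
  then obtain c where cU: "\<And>C. C \<in> Fs \<Longrightarrow> c \<in> U C" by auto
  define y where "y C = (1/2) *\<^sub>R (3 *\<^sub>R c - p C)" for C
  have cA: "c \<in> affine hull F" using cU n3 nFs Uiff by (metis all_not_in_conv card.empty not_numeral_le_zero le_trans)
  have ystrict: "\<And>h. h \<in> H \<Longrightarrow> a h \<bullet> y C < b h" if "C \<in> Fs" for C
    using cU[OF that] Uiff by (auto simp: y_def)
  have yA: "y C \<in> affine hull F" if "C \<in> Fs" for C
  proof -
    have "(3/2) *\<^sub>R c + (-1/2) *\<^sub>R p C \<in> affine hull F" by (rule mem_affine[OF aff cA pA[OF that]]) simp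
    then show ?thesis by (simp add: y_def algebra_simps)
  qed
  have yF: "y C \<in> F" if "C \<in> Fs" for C using memF yA[OF that] ystrict[OF that] less_imp_le by blast
  obtain C0 where C0: "C0 \<in> Fs" using n3 nFs by (metis all_not_in_conv card.empty not_numeral_le_zero le_trans)
  have cF: "c \<in> F"
  proof -
    have "(1/3) *\<^sub>R p C0 + (2/3) *\<^sub>R y C0 \<in> F" by (rule convexD[OF cvx pF[OF C0] yF[OF C0]]) auto
    then show ?thesis by (simp add: y_def algebra_simps)
  qed
  have chC: "a (hC C) \<bullet> c < b (hC C)" if "C \<in> Fs" for C
  proof -
    have "a (hC C) \<bullet> y C < b (hC C)" using ystrict[OF that hC(1)[OF that]] .
    then show ?thesis using ptight[OF that] by (simp add: y_def inner_diff_right)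
  qed
  define m where "m C D = (1/2) *\<^sub>R (p C + p D)" for C D
  have E1: "eventually (\<lambda>t. \<forall>C\<in>Fs. \<forall>D\<in>Fs. C \<noteq> D \<longrightarrow> (\<forall>h\<in>H. a h \<bullet> (m C D + t *\<^sub>R (m C D - c)) < b h)) (at_right (0::real))"
    by (intro eventually_ball_finite finFs ballI ev_imp finH ev_vec)
       (use strict_mid p in \<open>auto simp: m_def Fs_def\<close>)
  have E2: "eventually (\<lambda>t. \<forall>C\<in>Fs. \<forall>h\<in>H. a h \<bullet> (y C + t *\<^sub>R ((1/2) *\<^sub>R (c - p C))) < b h) (at_right (0::real))"
    by (intro eventually_ball_finite finFs ballI ev_imp finH ev_vec ystrict)
  have pD: "a (hC C) \<bullet> p D < b (hC C)" if "C \<in> Fs" "D \<in> Fs" "C \<noteq> D" for C D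
  proof -
    have "a (hC C) \<bullet> p D \<le> b (hC C)" using inF[OF pF[OF that(2)] hC(1)[OF that(1)]] .
    moreover have "a (hC C) \<bullet> p D \<noteq> b (hC C)"
    proof
      assume "a (hC C) \<bullet> p D = b (hC C)"
      then have "D = F \<inter> {x. a (hC C) \<bullet> x = b (hC C)}"
        using tight[OF _ p[OF that(2)] hC(1)[OF that(1)]] that(2) by (simp add: Fs_def)
      then show False using hC(2)[OF that(1)] that(3) by simp
    qed
    ultimately show ?thesis by simp
  qed
  have E3: "eventually (\<lambda>t. \<forall>C\<in>Fs. \<forall>D\<in>Fs. C \<noteq> D \<longrightarrow> a (hC C) \<bullet> (p D + t *\<^sub>R (p D - c)) < b (hC C)) (at_right (0::real))"
    by (intro eventually_ball_finite finFs ballI ev_imp ev_vec pD)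
  obtain t where t0: "t > 0"
    and T1: "\<And>C D h. C\<in>Fs \<Longrightarrow> D\<in>Fs \<Longrightarrow> C \<noteq> D \<Longrightarrow> h\<in>H \<Longrightarrow> a h \<bullet> (m C D + t *\<^sub>R (m C D - c)) < b h"
    and T2: "\<And>C h. C\<in>Fs \<Longrightarrow> h\<in>H \<Longrightarrow> a h \<bullet> (y C + t *\<^sub>R ((1/2) *\<^sub>R (c - p C))) < b h"
    and T3: "\<And>C D. C\<in>Fs \<Longrightarrow> D\<in>Fs \<Longrightarrow> C \<noteq> D \<Longrightarrow> a (hC C) \<bullet> (p D + t *\<^sub>R (p D - c)) < b (hC C)"
    using eventually_conj[OF E1 eventually_conj[OF E2 E3]] unfolding eventually_at_right_field
    by (metis field_lbound_gt_zero less_numeral_extra(1))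
  define z where "z C = p C + t *\<^sub>R (p C - c)" for C
  define Z where "Z = z ` Fs"
  have zA: "z C \<in> affine hull F" if "C \<in> Fs" for C
  proof -
    have "(1 + t) *\<^sub>R p C + (- t) *\<^sub>R c \<in> affine hull F" by (rule mem_affine[OF aff pA[OF that] cA]) simp
    then show ?thesis by (simp add: z_def algebra_simps)
  qed
  have zout: "a (hC C) \<bullet> z C > b (hC C)" if "C \<in> Fs" for C
  proof -
    have "a (hC C) \<bullet> z C = b (hC C) + t * (b (hC C) - a (hC C) \<bullet> c)"
      using ptight[OF that] by (simp add: z_def inner_add_right inner_diff_right)
    moreover have "t * (b (hC C) - a (hC C) \<bullet> c) > 0" using t0 chC[OF that] by simp
    ultimately show ?thesis by simp
  qed
  have zinj: "inj_on z Fs"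
  proof (rule inj_onI, rule ccontr)
    fix C D assume CD: "C \<in> Fs" "D \<in> Fs" "z C = z D" "C \<noteq> D"
    have "a (hC C) \<bullet> z D < b (hC C)" using T3[OF CD(1,2,4)] by (simp add: z_def)
    then show False using zout[OF CD(1)] CD(3) by simp
  qed
  show ?thesis
  proof (rule that[of c Z])
    show "c \<in> F" by fact
    show "finite Z" using finFs by (simp add: Z_def)
    show "n \<le> card Z" using nFs zinj by (simp add: Z_def card_image)
    show "Z \<subseteq> affine hull F - F"
    proof
      fix w assume "w \<in> Z"
      then obtain C where C: "C \<in> Fs" "w = z C" by (auto simp: Z_def)
      have "w \<notin> F"
      proof
        assume "w \<in> F"
        then have "a (hC C) \<bullet> w \<le> b (hC C)" using inF hC(1)[OF C(1)] by blast
        then show False using zout[OF C(1)] C(2) by simp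
      qed
      then show "w \<in> affine hull F - F" using zA[OF C(1)] C(2) by simp
    qed
    show "(1/2) *\<^sub>R (3 *\<^sub>R c - w) \<in> F" if "w \<in> Z" for w
    proof -
      obtain C where C: "C \<in> Fs" "w = z C" using \<open>w \<in> Z\<close> by (auto simp: Z_def)
      have eq: "(1/2) *\<^sub>R (3 *\<^sub>R c - w) = y C + t *\<^sub>R ((1/2) *\<^sub>R (c - p C))"
        by (simp add: C(2) z_def y_def algebra_simps)
      have "(3/2) *\<^sub>R c + (-1/2) *\<^sub>R w \<in> affine hull F" by (rule mem_affine[OF aff cA]) (use zA C in auto)
      then have "(1/2) *\<^sub>R (3 *\<^sub>R c - w) \<in> affine hull F" by (simp add: algebra_simps)
      moreover have "\<forall>h\<in>H. a h \<bullet> ((1/2) *\<^sub>R (3 *\<^sub>R c - w)) \<le> b h"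
        unfolding eq using T2[OF C(1)] by (simp add: less_imp_le)
      ultimately show ?thesis using memF by blast
    qed
    show "(1/2) *\<^sub>R (w + w') \<in> F" if "w \<in> Z" "w' \<in> Z" "w \<noteq> w'" for w w'
    proof -
      obtain C where C: "C \<in> Fs" "w = z C" using \<open>w \<in> Z\<close> by (auto simp: Z_def)
      obtain D where D: "D \<in> Fs" "w' = z D" using \<open>w' \<in> Z\<close> by (auto simp: Z_def)
      have CD: "C \<noteq> D" using C D \<open>w \<noteq> w'\<close> by auto
      have eq: "(1/2) *\<^sub>R (w + w') = m C D + t *\<^sub>R (m C D - c)"
        by (simp add: C(2) D(2) z_def m_def algebra_simps half_half)
      have "(1/2) *\<^sub>R w + (1/2) *\<^sub>R w' \<in> affine hull F" by (rule mem_affine[OF aff]) (use zA C D in auto)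
      then have "(1/2) *\<^sub>R (w + w') \<in> affine hull F" by (simp add: algebra_simps)
      moreover have "\<forall>h\<in>H. a h \<bullet> ((1/2) *\<^sub>R (w + w')) \<le> b h"
        unfolding eq using T1[OF C(1) D(1) CD] by (simp add: less_imp_le)
      ultimately show ?thesis using memF by blast
    qed
  qed
qed


theorem lemma5:
  fixes N :: "real^3 \<Rightarrow> real" and F :: "(real^3) set" and n :: nat
  assumes "is_norm N"
    and "F face_of unit_ball_N N"
    and "is_ngon F n"
  shows "enat (n + 1) \<le> m_num N"
proof -
  define B where "B = unit_ball_N N"
  note np = norm_props[OF assms(1)]
  have cB: "convex B" unfolding B_def by (rule convex_ball_N[OF assms(1)])
  have "0 \<in> interior B" unfolding B_def by (rule interior_ball_N[OF assms(1)]) (simp add: np)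
  then have "aff_dim B = 3" using aff_dim_nonempty_interior[of B] by auto
  moreover have F2: "aff_dim F = 2" using assms(3) by (simp add: is_ngon_def)
  ultimately have FB: "F \<noteq> B" by auto
  have fB: "F face_of B" using assms(2) B_def by simp
  have FsB: "F \<subseteq> B" using face_of_imp_subset[OF fB] .
  have nF: "N x = 1" if "x \<in> F" for x
  proof (rule ccontr)
    assume "N x \<noteq> 1"
    moreover have "N x \<le> 1" using FsB that by (auto simp: B_def unit_ball_N_def)
    ultimately have "x \<in> interior B" unfolding B_def by (intro interior_ball_N[OF assms(1)]) auto
    then show False using face_of_disjoint_interior[OF fB FB] that by auto
  qed
  have AB: "affine hull F \<inter> B = F" using face_of_imp_eq_affine_Int[OF cB fB] by simp
  obtain c Z where c: "c \<in> F" and fZ: "finite Z" and cZ: "card Z \<ge> n"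
    and ZA: "Z \<subseteq> affine hull F - F"
    and Zc: "\<And>z. z \<in> Z \<Longrightarrow> (1/2) *\<^sub>R (3 *\<^sub>R c - z) \<in> F"
    and ZZ: "\<And>z z'. z \<in> Z \<Longrightarrow> z' \<in> Z \<Longrightarrow> z \<noteq> z' \<Longrightarrow> (1/2) *\<^sub>R (z + z') \<in> F"
    using core[of F n] assms(3) by (auto simp: is_ngon_def)
  define x0 where "x0 = (-3) *\<^sub>R c"
  define S where "S = insert x0 Z"
  have x0Z: "x0 \<notin> Z"
  proof
    assume "x0 \<in> Z"
    then have "x0 \<in> affine hull F" using ZA by auto
    moreover have "c \<in> affine hull F" using c by (simp add: hull_inc)
    ultimately have "(3/4) *\<^sub>R c + (1/4) *\<^sub>R x0 \<in> affine hull F"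
      by (intro mem_affine[OF affine_affine_hull]) auto
    moreover have "(3/4) *\<^sub>R c + (1/4) *\<^sub>R x0 = 0" by (simp add: x0_def)
    ultimately have "0 \<in> affine hull F" by simp
    moreover have "0 \<in> B" by (simp add: B_def unit_ball_N_def np)
    ultimately have "0 \<in> F" using AB by auto
    then show False using nF np by auto
  qed
  have NZ: "N z > 1" if "z \<in> Z" for z
  proof (rule ccontr)
    assume "\<not> N z > 1"
    then have "z \<in> B" by (simp add: B_def unit_ball_N_def)
    then show False using AB ZA that by auto
  qed
  have Nx0: "N x0 = 3" using nF[OF c] np by (simp add: x0_def)
  have MS: "M_set N S"
    unfolding M_set_def
  proof safe
    fix x assume "x \<in> S" then show "N x > 1" using NZ Nx0 by (auto simp: S_def)
  next
    fix m assume "m \<in> midpoint_set S"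
    then obtain x y where m: "m = (1/2) *\<^sub>R (x + y)" and xy: "x \<in> S" "y \<in> S" "x \<noteq> y"
      by (auto simp: midpoint_set_def)
    have mx: "(1/2) *\<^sub>R (x0 + z) = - ((1/2) *\<^sub>R (3 *\<^sub>R c - z))" for z
      by (simp add: x0_def algebra_simps)
    show "N m = 1"
    proof (cases "x = x0")
      case True
      then have "y \<in> Z" using xy by (auto simp: S_def)
      then show ?thesis using m True mx nF Zc np(2) by metis
    next
      case False
      then have x: "x \<in> Z" using xy by (auto simp: S_def)
      show ?thesis
      proof (cases "y = x0")
        case True
        then have "m = (1/2) *\<^sub>R (x0 + x)" using m by (simp add: add.commute)
        then show ?thesis using x mx nF Zc np(2) by metis
      next
        case False
        then have "y \<in> Z" using xy by (auto simp: S_def)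
        then show ?thesis using ZZ x xy m nF by auto
      qed
    qed
  qed
  have fS: "finite S" using fZ by (simp add: S_def)
  have cS: "card S = card Z + 1" using fZ x0Z by (simp add: S_def)
  have "enat (n + 1) \<le> enat (card S)" using cS cZ by simp
  also have "\<dots> \<le> m_num N" unfolding m_num_def
    by (rule SUP_upper) (use MS fS in auto)
  finally show ?thesis .
qed

end
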